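(* Construct matrix $\check{\boldsymbol{\mathcal{A}}} \in \mathbb{R}^{4 s n^2\times 4 s n^2}$ with its $ij$-th $4n^2 \times 4n^2$ block given by $[\check{\boldsymbol{\mathcal{A}}}]_{ij}:= \mathbf{T}(j,i) \cdot \begin{bmatrix} \mathbf{A}_j & \\ & \mathbf{A}_j \end{bmatrix} \otimes \begin{bmatrix} \mathbf{A}_j & \\ & \mathbf{A}_j \end{bmatrix}$. Then, for all $k \in \mathbb{N}$, $\|\check{\boldsymbol{\mathcal{A}}}^k\| \leq \tau \rho^k$.
   Context: Let $\mathbf{A}_1,\dots,\mathbf{A}_s\in\mathbb{R}^{n\times n}$ be the state matrices of an MJS with Markov transition matrix $\mathbf{T}\in\mathbb{R}^{s\times s}$. Define the augmented matrix $\boldsymbol{\mathcal{A}}\in\mathbb{R}^{sn^2\times sn^2}$ with $ij$-th $n^2\times n^2$ block $\mathbf{T}(j,i)\,\mathbf{A}_j\otimes\mathbf{A}_j$. For any $\rho\ge\rho(\boldsymbol{\mathcal{A}})$ (spectral radius), let $\tau:=\sup_{k\in\mathbb{N}}\|\boldsymbol{\mathcal{A}}^k\|/\rho^k$, so that $\|\boldsymbol{\mathcal{A}}^k\|\le\tau\rho^k$ for all $k$. *)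

theory Defs
  imports "HOL-Analysis.Analysis"
begin

primrec matpow :: "real^'n^'n \<Rightarrow> nat \<Rightarrow> real^'n^'n" where
  "matpow M 0 = mat 1"
| "matpow M (Suc k) = M ** matpow M k"

definition mnorm :: "real^'n^'m \<Rightarrow> real" where
  "mnorm M = onorm (\<lambda>x. M *v x)"

definition cmat :: "real^'n^'m \<Rightarrow> complex^'n^'m" where
  "cmat M = (\<chi> i j. complex_of_real (M $ i $ j))"

definition spec_rad :: "real^'n^'n \<Rightarrow> real" where
  "spec_rad M = Sup {cmod z | z. \<exists>v. v \<noteq> 0 \<and> cmat M *v v = z *s v}"

text \<open>Kronecker product; row index (a,b) corresponds to block a, position b.\<close>
definition kron :: "real^'c^'a \<Rightarrow> real^'d^'b \<Rightarrow> real^('c \<times> 'd)^('a \<times> 'b)" where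
  "kron X Y = (\<chi> r c. X $ fst r $ fst c * Y $ snd r $ snd c)"

definition bdiag2 :: "real^'n^'n \<Rightarrow> real^(bool \<times> 'n)^(bool \<times> 'n)" where
  "bdiag2 X = (\<chi> r c. if fst r = fst c then X $ snd r $ snd c else 0)"

definition block_aug :: "real^'s^'s \<Rightarrow> ('s \<Rightarrow> real^'m^'m) \<Rightarrow> real^('s \<times> 'm)^('s \<times> 'm)" where
  "block_aug T B = (\<chi> r c. T $ fst c $ fst r * B (fst c) $ snd r $ snd c)"

definition augA :: "real^'s^'s \<Rightarrow> ('s \<Rightarrow> real^'n^'n) \<Rightarrow> real^('s \<times> 'n \<times> 'n)^('s \<times> 'n \<times> 'n)" where
  "augA T A = block_aug T (\<lambda>j. kron (A j) (A j))"

definition augA_check :: "real^'s^'s \<Rightarrow> ('s \<Rightarrow> real^'n^'n)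
    \<Rightarrow> real^('s \<times> (bool \<times> 'n) \<times> (bool \<times> 'n))^('s \<times> (bool \<times> 'n) \<times> (bool \<times> 'n))" where
  "augA_check T A = block_aug T (\<lambda>j. kron (bdiag2 (A j)) (bdiag2 (A j)))"

end

theory Submission
  imports Defs
begin

definition gmap :: "(bool \<times> bool) \<times> ('s \<times> 'n \<times> 'n) \<Rightarrow> 's \<times> (bool \<times> 'n) \<times> (bool \<times> 'n)" where
  "gmap p = (fst (snd p), (fst (fst p), fst (snd (snd p))), (snd (fst p), snd (snd (snd p))))"

definition ginv :: "'s \<times> (bool \<times> 'n) \<times> (bool \<times> 'n) \<Rightarrow> (bool \<times> bool) \<times> ('s \<times> 'n \<times> 'n)" where
  "ginv r = ((fst (fst (snd r)), fst (snd (snd r))), (fst r, snd (fst (snd r)), snd (snd (snd r))))"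

lemma sum_gmap:
  fixes h :: "'s::finite \<times> (bool \<times> 'n::finite) \<times> (bool \<times> 'n) \<Rightarrow> real"
  shows "sum h UNIV = (\<Sum>b\<in>UNIV. \<Sum>i\<in>UNIV. h (gmap (b,i)))"
proof -
  have "sum h UNIV = sum (h \<circ> gmap) UNIV"
  proof -
    have b: "bij (gmap :: (bool \<times> bool) \<times> ('s \<times> 'n \<times> 'n) \<Rightarrow> _)"
      by (rule o_bij[where g=ginv]) (auto simp: gmap_def ginv_def fun_eq_iff)
    show ?thesis using sum.reindex_bij_betw[OF b, of h] by (simp add: comp_def)
  qed
  also have "\<dots> = (\<Sum>b\<in>UNIV. \<Sum>i\<in>UNIV. h (gmap (b,i)))"
    by (simp add: sum.cartesian_product UNIV_Times_UNIV[symmetric] del: UNIV_Times_UNIV)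
  finally show ?thesis .
qed

definition split_vec :: "bool \<times> bool \<Rightarrow> real^('s::finite \<times> (bool \<times> 'n::finite) \<times> (bool \<times> 'n)) \<Rightarrow> real^('s \<times> 'n \<times> 'n)" where
  "split_vec b x = (\<chi> i. x $ gmap (b, i))"

lemma step:
  fixes A :: "'s::finite \<Rightarrow> real^'n::finite^'n" and T :: "real^'s^'s"
  shows "split_vec b (augA_check T A *v y) = augA T A *v split_vec b y"
proof -
  have "(augA_check T A *v y) $ gmap (b, i) = (augA T A *v split_vec b y) $ i" for i
  proof -
    have "(augA_check T A *v y) $ gmap (b, i) =
      (\<Sum>c\<in>UNIV. \<Sum>j\<in>UNIV. augA_check T A $ gmap (b, i) $ gmap (c, j) * y $ gmap (c, j))"
      unfolding matrix_vector_mult_def by (simp add: sum_gmap[where h="\<lambda>j. augA_check T A $ gmap (b, i) $ j * y $ j"])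
    also have "\<dots> = (\<Sum>c\<in>UNIV. if c = b then \<Sum>j\<in>UNIV. augA T A $ i $ j * y $ gmap (c, j) else 0)"
    proof (rule sum.cong[OF refl])
      fix c :: "bool \<times> bool"
      show "(\<Sum>j\<in>UNIV. augA_check T A $ gmap (b, i) $ gmap (c, j) * y $ gmap (c, j)) =
        (if c = b then \<Sum>j\<in>UNIV. augA T A $ i $ j * y $ gmap (c, j) else 0)"
      proof (cases "c = b")
        case True
        then show ?thesis
          by (auto simp: augA_check_def augA_def block_aug_def kron_def bdiag2_def gmap_def intro!: sum.cong)
      next
        case False
        then have "fst b \<noteq> fst c \<or> snd b \<noteq> snd c" by (auto simp: prod_eq_iff)
        then show ?thesis using False
          by (auto simp: augA_check_def augA_def block_aug_def kron_def bdiag2_def gmap_def)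
      qed
    qed
    also have "\<dots> = (augA T A *v split_vec b y) $ i"
      by (simp add: matrix_vector_mult_def split_vec_def)
    finally show ?thesis .
  qed
  then show ?thesis by (simp add: split_vec_def vec_eq_iff)
qed

lemma pow_split:
  fixes A :: "'s::finite \<Rightarrow> real^'n::finite^'n" and T :: "real^'s^'s"
  shows "split_vec b (matpow (augA_check T A) k *v y) = matpow (augA T A) k *v split_vec b y"
  by (induction k arbitrary: y) (simp_all add: matrix_vector_mul_assoc[symmetric] step)

lemma norm_split:
  fixes x :: "real^('s::finite \<times> (bool \<times> 'n::finite) \<times> (bool \<times> 'n))"
  shows "(norm x)^2 = (\<Sum>b\<in>UNIV. (norm (split_vec b x))^2)"
  by (simp add: power2_norm_eq_inner inner_vec_def sum_gmap[where h="\<lambda>i. x $ i * x $ i"] split_vec_def)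

theorem lemma12:
  fixes A :: "'s::finite \<Rightarrow> real^'n::finite^'n" and T :: "real^'s^'s" and \<rho> \<tau> :: real
  assumes T_nonneg: "\<forall>i j. T $ i $ j \<ge> 0"
    and T_stoch: "\<forall>i. (\<Sum>j\<in>UNIV. T $ i $ j) = 1"
    and rho: "\<rho> \<ge> spec_rad (augA T A)"
    and tau_def: "\<tau> = (SUP k. mnorm (matpow (augA T A) k) / \<rho> ^ k)"
    and tau_bound: "\<forall>k. mnorm (matpow (augA T A) k) \<le> \<tau> * \<rho> ^ k"
  shows "\<forall>k. mnorm (matpow (augA_check T A) k) \<le> \<tau> * \<rho> ^ k"
proof
  fix k
  let ?M = "matpow (augA T A) k"
  let ?N = "matpow (augA_check T A) k"
  let ?c = "mnorm ?M"
  have c0: "0 \<le> ?c" unfolding mnorm_def by (rule onorm_pos_le) simp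
  have "norm (?N *v x) \<le> ?c * norm x" for x
  proof (rule power2_le_imp_le)
    have "(norm (?N *v x))^2 = (\<Sum>b\<in>UNIV. (norm (?M *v split_vec b x))^2)"
      by (simp add: norm_split pow_split)
    also have "\<dots> \<le> (\<Sum>b\<in>UNIV. (?c * norm (split_vec b x))^2)"
    proof (rule sum_mono)
      fix b
      have "norm (?M *v split_vec b x) \<le> ?c * norm (split_vec b x)"
        unfolding mnorm_def by (rule onorm) simp
      then show "(norm (?M *v split_vec b x))^2 \<le> (?c * norm (split_vec b x))^2"
        by (simp add: power_mono)
    qed
    also have "\<dots> = (?c * norm x)^2"
      by (simp add: power_mult_distrib norm_split sum_distrib_left)
    finally show "(norm (?N *v x))^2 \<le> (?c * norm x)^2" .
    show "0 \<le> ?c * norm x" using c0 by simp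
  qed
  then have "mnorm ?N \<le> ?c" unfolding mnorm_def by (rule onorm_le)
  then show "mnorm ?N \<le> \<tau> * \<rho> ^ k" using tau_bound by (meson order_trans)
qed

end
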